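(* Let $p \geq 1$, let $\boldsymbol \Omega$ be a $p\times p$ positive definite matrix and $\boldsymbol \Psi$ a $p\times p$ non-diagonal positive definite matrix with unit diagonal. Let $\boldsymbol \beta = \boldsymbol s \circ \boldsymbol z$ where $\boldsymbol z \sim \text{normal}(\boldsymbol 0, \boldsymbol \Omega)$ and $\boldsymbol s \sim \text{normal}(\boldsymbol 0, \boldsymbol \Psi)$ are independent (the SPN prior). Then for every $j \in \{1,\dots,p\}$ the marginal prior density of $\beta_j$ at $0$, $$p(\beta_j = 0 \mid \boldsymbol \Psi, \boldsymbol \Omega) = \int_{\mathbb{R}^{p-1}} \int_{\mathbb{R}^p} \Big(\prod_{i=1}^p \frac{1}{|s_i|}\Big)\phi_{\boldsymbol \Omega}(\boldsymbol b/\boldsymbol s)\,\phi_{\boldsymbol \Psi}(\boldsymbol s)\, d\boldsymbol s\, d\boldsymbol b_{-j}\Big|_{b_j = 0},$$ equals $+\infty$.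
   Context: $\phi_{\boldsymbol A}$ denotes the $\text{normal}(\boldsymbol 0,\boldsymbol A)$ density, $\boldsymbol b/\boldsymbol s$ is elementwise division, $\circ$ is the elementwise product, and $\boldsymbol b_{-j}$ denotes $\boldsymbol b$ with its $j$-th coordinate removed (the outer integral is over $\boldsymbol b_{-j}$ with $b_j$ fixed at $0$). *)

theory Defs
  imports "HOL-Analysis.Analysis"
begin

definition pos_def_mat :: "real^'n^'n \<Rightarrow> bool" where
  "pos_def_mat A \<longleftrightarrow> transpose A = A \<and> (\<forall>x. x \<noteq> 0 \<longrightarrow> x \<bullet> (A *v x) > 0)"

definition mvn_density :: "real^'n^'n \<Rightarrow> real^'n \<Rightarrow> real" where
  "mvn_density A x =
     exp (- (x \<bullet> (matrix_inv A *v x)) / 2) / sqrt ((2 * pi) ^ CARD('n) * det A)"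

end

theory Submission imports Defs begin
lemma emeasure_box_cart:
  fixes l u :: "real^'n"
  assumes "\<And>i. l$i \<le> u$i"
  shows "emeasure lborel (box l u) = ennreal (\<Prod>i\<in>UNIV. u$i - l$i)"
proof -
  have "measure lborel (box l u) = measure lborel (cbox l u)"
    by (simp add: measure_lborel_box_eq measure_lborel_cbox_eq)
  also have "\<dots> = (\<Prod>i\<in>UNIV. u$i - l$i)"
  proof -
    have "l \<in> cbox l u" using assms by (simp add: mem_box_cart)
    then show ?thesis using content_cbox_cart[of l u] by blast
  qed
  finally show ?thesis using emeasure_lborel_box_finite[of l u]
    by (simp add: emeasure_eq_ennreal_measure)
qed

lemma dens_lb:
  fixes A :: "real^'n^'n"
  assumes "pos_def_mat A" and dpos: "det A > 0"
  shows "\<exists>c>0. \<forall>x. norm x \<le> R \<longrightarrow> mvn_density A x \<ge> c"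
proof -
  obtain K where K: "K > 0" "\<And>x. norm (matrix_inv A *v x) \<le> norm x * K"
    using bounded_linear.pos_bounded[OF matrix_vector_mul_bounded_linear[of "matrix_inv A"]] by blast
  define D where "D = sqrt ((2 * pi) ^ CARD('n) * det A)"
  have D: "D > 0" unfolding D_def using dpos by simp
  define c where "c = exp (- (K * R^2) / 2) / D"
  have "c > 0" unfolding c_def using D by simp
  moreover have "mvn_density A x \<ge> c" if "norm x \<le> R" for x
  proof -
    have "x \<bullet> (matrix_inv A *v x) \<le> norm x * norm (matrix_inv A *v x)"
      by (rule order_trans[OF _ Cauchy_Schwarz_ineq2]) simp
    also have "\<dots> \<le> norm x * (norm x * K)" by (intro mult_left_mono K) auto
    also have "\<dots> = K * norm x ^ 2" by (simp add: power2_eq_square)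
    also have "\<dots> \<le> K * R^2" using that K(1) by (intro mult_left_mono power_mono) auto
    finally have "exp (- (K * R^2) / 2) \<le> exp (- (x \<bullet> (matrix_inv A *v x)) / 2)" by simp
    then show ?thesis unfolding mvn_density_def c_def D_def[symmetric] using D
      by (simp add: divide_right_mono)
  qed
  ultimately show ?thesis by blast
qed
lemma det_nz_posdef:
  fixes M :: "real^'n^'n"
  assumes "\<And>x. x \<noteq> 0 \<Longrightarrow> x \<bullet> (M *v x) > 0"
  shows "det M \<noteq> 0"
proof -
  have "inj ((*v) M)"
  proof (rule injI)
    fix x y assume "M *v x = M *v y"
    then have "M *v (x - y) = 0" by (simp add: matrix_vector_mult_diff_distrib)
    then show "x = y" using assms[of "x - y"] by (cases "x - y = 0") auto
  qed
  then show ?thesis using det_nz_iff_inj[of "(*v) M"] by (simp add: matrix_of_matrix_vector_mul)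
qed

lemma det_cont: "continuous_on S (\<lambda>t::real. det ((1 - t) *\<^sub>R mat 1 + t *\<^sub>R (M::real^'n^'n)))"
  unfolding det_def by (intro continuous_intros) 

lemma det_pos:
  fixes M :: "real^'n^'n"
  assumes "pos_def_mat M"
  shows "det M > 0"
proof (rule ccontr)
  assume "\<not> det M > 0"
  let ?g = "\<lambda>t::real. det ((1 - t) *\<^sub>R mat 1 + t *\<^sub>R M)"
  have "?g 0 = 1" by simp
  moreover have "?g 1 \<le> 0" using \<open>\<not> det M > 0\<close> by simp
  ultimately obtain t where t: "0 \<le> t" "t \<le> 1" "?g t = 0"
    using IVT2'[of ?g 1 0 0] det_cont[of "{0..1}" M] by auto
  have "det ((1 - t) *\<^sub>R mat 1 + t *\<^sub>R M) \<noteq> 0"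
  proof (rule det_nz_posdef)
    fix x :: "real^'n" assume x: "x \<noteq> 0"
    have "x \<bullet> (((1 - t) *\<^sub>R mat 1 + t *\<^sub>R M) *v x) = (1 - t) * (x \<bullet> x) + t * (x \<bullet> (M *v x))"
      by (simp add: matrix_vector_mult_add_rdistrib inner_add_right scaleR_matrix_vector_assoc[symmetric])
    moreover have "x \<bullet> x > 0" using x by simp
    moreover have "x \<bullet> (M *v x) > 0" using assms x unfolding pos_def_mat_def by auto
    ultimately show "x \<bullet> (((1 - t) *\<^sub>R mat 1 + t *\<^sub>R M) *v x) > 0" using t
      by (smt (verit) mult_nonneg_nonneg mult_pos_pos)
  qed
  then show False using t by simp
qed

lemma ennreal_infI:
  fixes x :: ennreal and c :: real
  assumes "c > 0" "\<And>N::nat. ennreal (real N * c) \<le> x"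
  shows "x = \<infinity>"
proof (rule ccontr)
  assume "x \<noteq> \<infinity>"
  then obtain r where r: "x = ennreal r" "r \<ge> 0" by (cases x) auto
  obtain N :: nat where N: "r / c < real N" using reals_Archimedean2 by blast
  have "r < real N * c" using N assms(1) by (simp add: field_simps)
  moreover have "real N * c \<le> r" using assms(2)[of N] r assms(1) by (simp add: ennreal_le_iff)
  ultimately show False by simp
qed

theorem proposition2p3:
  fixes \<Omega> \<Psi> :: "real^'n^'n" and j :: 'n
  assumes "pos_def_mat \<Omega>" and "pos_def_mat \<Psi>"
    and "\<forall>i. \<Psi> $ i $ i = 1"
    and "\<exists>i k. i \<noteq> k \<and> \<Psi> $ i $ k \<noteq> 0"
  shows "(\<integral>\<^sup>+ b. (\<integral>\<^sup>+ s. ennreal ((\<Prod>i\<in>UNIV. 1 / \<bar>s $ i\<bar>)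
              * mvn_density \<Omega> (\<chi> i. (if i = j then 0 else b i) / s $ i)
              * mvn_density \<Psi> s) \<partial>lborel)
           \<partial>(PiM (UNIV - {j}) (\<lambda>_. lborel))) = \<infinity>"
proof -
  define n where "n = CARD('n)"
  define R where "R = 2 * real n"
  obtain cO where cO: "cO > 0" "\<And>x. norm x \<le> R \<Longrightarrow> mvn_density \<Omega> x \<ge> cO"
    using dens_lb[OF assms(1) det_pos[OF assms(1)], of R] by blast
  obtain cP where cP: "cP > 0" "\<And>x. norm x \<le> R \<Longrightarrow> mvn_density \<Psi> x \<ge> cP"
    using dens_lb[OF assms(2) det_pos[OF assms(2)], of R] by blast
  define A where "A = (1/2)^n * cO * cP"
  have A: "A > 0" unfolding A_def using cO cP by simp
  define f where "f = (\<lambda>b s. (\<Prod>i\<in>UNIV. 1 / \<bar>s $ i\<bar>)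
              * mvn_density \<Omega> (\<chi> i. (if i = j then 0 else b i) / s $ i)
              * mvn_density \<Psi> (s::real^'n))"
  define l where "l = (\<lambda>k::nat. (\<chi> i. if i = j then (1/2::real)^(Suc k) else 1) :: real^'n)"
  define u where "u = (\<lambda>k::nat. (\<chi> i. if i = j then (1/2::real)^k else 2) :: real^'n)"
  have pw: "A * 2^k \<le> f b s" if b: "\<forall>i. i \<noteq> j \<longrightarrow> b i \<in> {1..2}" and s: "s \<in> box (l k) (u k)" for b s k
  proof -
    have sall: "\<And>i. l k $ i < s$i \<and> s$i < u k $ i" using s by (simp add: mem_box_cart)
    have sb12: "(1/2)^(Suc k) < s$j" "s$j < (1/2)^k"
      using sall[of j] by (auto simp: l_def u_def)
    have sb3: "1 < s$i \<and> s$i < 2" if "i \<noteq> j" for i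
      using sall[of i] that by (auto simp: l_def u_def)
    note sb = sb12 sb3
    have hk: "(1/2::real)^k \<le> 1" by (simp add: power_le_one)
    have "(\<Prod>i\<in>UNIV. (if i = j then 2^k else 1) * (1/2::real)) \<le> (\<Prod>i\<in>UNIV. 1 / \<bar>s $ i\<bar>)"
    proof (rule prod_mono)
      fix i :: 'n
      show "0 \<le> (if i = j then 2^k else 1) * (1/2::real) \<and> (if i = j then 2^k else 1) * (1/2::real) \<le> 1 / \<bar>s $ i\<bar>"
      proof (cases "i = j")
        case True
        have "s$j > 0" using sb(1) zero_less_power[of "1/2::real" "Suc k"] by linarith
        then have "2^k \<le> 1 / \<bar>s$j\<bar>" using sb(2)
          by (simp add: field_simps power_divide) 
        moreover have "(2::real)^k * (1/2) \<le> 2^k" by simp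
        ultimately have "(2::real)^k * (1/2) \<le> 1 / \<bar>s$j\<bar>" by linarith
        moreover have "(0::real) \<le> 2^k * (1/2)" by simp
        ultimately show ?thesis using True by (simp only: if_True refl)
      next
        case False
        then show ?thesis using sb(3)[of i] by (simp add: field_simps)
      qed
    qed
    moreover have "(\<Prod>i\<in>UNIV. (if i = j then 2^k else 1) * (1/2::real)) = 2^k * (1/2)^n"
      by (subst prod.distrib) (simp add: n_def)
    ultimately have P: "2^k * (1/2)^n \<le> (\<Prod>i\<in>UNIV. 1 / \<bar>s $ i\<bar>)" by simp
    let ?x = "(\<chi> i. (if i = j then 0 else b i) / s $ i) :: real^'n"
    have "norm ?x \<le> (\<Sum>i\<in>UNIV. \<bar>?x$i\<bar>)" by (rule norm_le_l1_cart)
    also have "\<dots> \<le> (\<Sum>i\<in>(UNIV::'n set). 2)"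
    proof (rule sum_mono)
      fix i :: 'n
      show "\<bar>?x$i\<bar> \<le> 2"
      proof (cases "i = j")
        case False
        then have "1 \<le> b i" "b i \<le> 2" "1 < s$i" using b sb(3)[of i] by auto
        then have "b i / s$i \<le> 2" "0 \<le> b i / s$i" by (auto simp: field_simps)
        then show ?thesis using False by simp
      qed simp
    qed
    also have "\<dots> = R" by (simp add: R_def n_def)
    finally have x: "norm ?x \<le> R" .
    have "norm s \<le> (\<Sum>i\<in>UNIV. \<bar>s$i\<bar>)" by (rule norm_le_l1_cart)
    also have "\<dots> \<le> (\<Sum>i\<in>(UNIV::'n set). 2)"
    proof (rule sum_mono)
      fix i :: 'n
      show "\<bar>s$i\<bar> \<le> 2"
      proof (cases "i = j")
        case True
        have "s$j > 0" using sb(1) zero_less_power[of "1/2::real" "Suc k"] by linarith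
        then show ?thesis using True sb(2) hk by simp
      next
        case False
        then show ?thesis using sb(3)[of i] by simp
      qed
    qed
    also have "\<dots> = R" by (simp add: R_def n_def)
    finally have sR: "norm s \<le> R" .
    have "A * 2^k = (2^k * (1/2)^n) * cO * cP" unfolding A_def by simp
    also have "\<dots> \<le> f b s" unfolding f_def
      using P cO(2)[OF x] cP(2)[OF sR] cO(1) cP(1) prod_nonneg[of UNIV "\<lambda>i. 1 / \<bar>s $ i\<bar>"]
      by (intro mult_mono) auto
    finally show ?thesis .
  qed
  have disj: "k = m" if "s \<in> box (l k) (u k)" "s \<in> box (l m) (u m)" for s k m
  proof (rule ccontr)
    assume "k \<noteq> m"
    have a: "(1/2::real)^(Suc k) < s$j" "s$j < (1/2)^k" "(1/2::real)^(Suc m) < s$j" "s$j < (1/2)^m"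
      using that by (auto simp: mem_box_cart l_def u_def dest!: spec[of _ j])
    show False
    proof (cases "k < m")
      case True
      then have "(1/2::real)^m \<le> (1/2)^(Suc k)" by (intro power_decreasing) auto
      then show False using a by simp
    next
      case False
      then have "m < k" using \<open>k \<noteq> m\<close> by simp
      then have "(1/2::real)^k \<le> (1/2)^(Suc m)" by (intro power_decreasing) auto
      then show False using a by simp
    qed
  qed
  have inner: "(\<integral>\<^sup>+ s. ennreal (f b s) \<partial>lborel) = \<infinity>" if b: "\<forall>i. i \<noteq> j \<longrightarrow> b i \<in> {1..2}" for b
  proof (rule ennreal_infI[of "A/2"])
    show "A/2 > 0" using A by simp
    fix N :: nat
    have le: "(\<Sum>k<N. ennreal (A * 2^k) * indicator (box (l k) (u k)) s) \<le> ennreal (f b s)" for s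
    proof (cases "\<exists>m<N. s \<in> box (l m) (u m)")
      case True
      then obtain m where m: "m < N" "s \<in> box (l m) (u m)" by blast
      have "(\<Sum>k<N. ennreal (A * 2^k) * indicator (box (l k) (u k)) s) = (\<Sum>k<N. if k = m then ennreal (A * 2^m) else 0)"
        using disj m(2) by (intro sum.cong) (auto simp: indicator_def)
      also have "\<dots> = ennreal (A * 2^m)" using m(1) by simp
      also have "\<dots> \<le> ennreal (f b s)" using pw[OF b m(2)] by (rule ennreal_leI)
      finally show ?thesis .
    next
      case False
      then have "(\<Sum>k<N. ennreal (A * 2^k) * indicator (box (l k) (u k)) s) = 0"
        by (intro sum.neutral) auto
      then show ?thesis by simp
    qed
    have meas: "emeasure lborel (box (l k) (u k)) = ennreal ((1/2)^(Suc k))" for k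
    proof -
      have "emeasure lborel (box (l k) (u k)) = ennreal (\<Prod>i\<in>UNIV. u k $ i - l k $ i)"
        by (rule emeasure_box_cart) (auto simp: l_def u_def power_decreasing)
      also have "(\<Prod>i\<in>UNIV. u k $ i - l k $ i) = (\<Prod>i\<in>UNIV. if i = j then (1/2::real)^(Suc k) else 1)"
        by (intro prod.cong) (auto simp: l_def u_def)
      also have "\<dots> = (1/2)^(Suc k)" by simp
      finally show ?thesis .
    qed
    have "ennreal (real N * (A/2)) = (\<Sum>k<N. ennreal (A/2))"
    proof -
      have "ennreal (real N * (A/2)) = ennreal (real N) * ennreal (A/2)"
        using A by (intro ennreal_mult) auto
      also have "\<dots> = of_nat N * ennreal (A/2)" by (simp add: ennreal_of_nat_eq_real_of_nat)
      finally show ?thesis by simp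
    qed
    also have "\<dots> = (\<Sum>k<N. ennreal (A * 2^k) * emeasure lborel (box (l k) (u k)))"
    proof (intro sum.cong refl)
      fix k assume "k \<in> {..<N}"
      have "A * 2^k * (1/2)^(Suc k) = A/2" by (simp add: power_one_over field_simps)
      then show "ennreal (A/2) = ennreal (A * 2^k) * emeasure lborel (box (l k) (u k))"
        unfolding meas using A by (simp add: ennreal_mult'[symmetric])
    qed
    also have "\<dots> = (\<integral>\<^sup>+ s. (\<Sum>k<N. ennreal (A * 2^k) * indicator (box (l k) (u k)) s) \<partial>lborel)"
      by (subst nn_integral_sum) (auto simp: nn_integral_cmult_indicator)
    also have "\<dots> \<le> (\<integral>\<^sup>+ s. ennreal (f b s) \<partial>lborel)"
      by (intro nn_integral_mono le)
    finally show "ennreal (real N * (A/2)) \<le> (\<integral>\<^sup>+ s. ennreal (f b s) \<partial>lborel)" .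
  qed
  define S where "S = (PiE (UNIV - {j}) (\<lambda>_. {1..2::real}))"
  interpret ps: product_sigma_finite "\<lambda>_::'n. lborel :: real measure"
    by (simp add: product_sigma_finite_def lborel.sigma_finite_measure_axioms)
  have Ssets: "S \<in> sets (PiM (UNIV - {j}) (\<lambda>_. lborel))"
    unfolding S_def by (intro sets_PiM_I_finite) auto
  have SM: "emeasure (PiM (UNIV - {j}) (\<lambda>_. lborel)) S = 1"
    unfolding S_def by (subst ps.emeasure_PiM) auto
  have "(\<integral>\<^sup>+ b. \<infinity> * indicator S b \<partial>(PiM (UNIV - {j}) (\<lambda>_. lborel))) = \<infinity> * emeasure (PiM (UNIV - {j}) (\<lambda>_. lborel)) S"
    by (rule nn_integral_cmult_indicator[OF Ssets])
  then have "\<infinity> = (\<integral>\<^sup>+ b. \<infinity> * indicator S b \<partial>(PiM (UNIV - {j}) (\<lambda>_. lborel)))"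
    unfolding SM by simp
  also have "\<dots> \<le> (\<integral>\<^sup>+ b. (\<integral>\<^sup>+ s. ennreal (f b s) \<partial>lborel) \<partial>(PiM (UNIV - {j}) (\<lambda>_. lborel)))"
  proof (rule nn_integral_mono)
    fix b assume "b \<in> space (PiM (UNIV - {j}) (\<lambda>_. lborel :: real measure))"
    show "\<infinity> * indicator S b \<le> (\<integral>\<^sup>+ s. ennreal (f b s) \<partial>lborel)"
    proof (cases "b \<in> S")
      case True
      have "\<forall>i. i \<noteq> j \<longrightarrow> b i \<in> {1..2}"
      proof (intro allI impI)
        fix i assume "i \<noteq> j"
        then show "b i \<in> {1..2}" using PiE_mem[OF True[unfolded S_def], of i] by simp
      qed
      then have "(\<integral>\<^sup>+ s. ennreal (f b s) \<partial>lborel) = \<infinity>" by (rule inner)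
      then show ?thesis by simp
    next
      case False
      then show ?thesis by simp
    qed
  qed
  finally have "\<infinity> \<le> (\<integral>\<^sup>+ b. (\<integral>\<^sup>+ s. ennreal (f b s) \<partial>lborel) \<partial>(PiM (UNIV - {j}) (\<lambda>_. lborel)))" .
  then have eq: "(\<integral>\<^sup>+ b. (\<integral>\<^sup>+ s. ennreal (f b s) \<partial>lborel) \<partial>(PiM (UNIV - {j}) (\<lambda>_. lborel))) = \<infinity>"
    unfolding infinity_ennreal_def by (rule top_unique[THEN iffD1])
  show ?thesis using eq unfolding f_def by simp
qed
end
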